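(* For integers $n\ge1$, $m\ge0$ let $d_{n,m}=\operatorname{Tr}(J_nB_n^{2m})$. Then $d_{n,0}=1+d_{n-1,0}=n$ (for $n\ge2$; $d_{1,0}=1$), $d_{1,m}=\delta_{0,m}$, and for $n\ge2$, $m\ge1$, $$d_{n,m}=d_{n-1,m}+\sum_{k=0}^{m-1}d_{n-1,k}\,d_{n,m-k-1}.$$
   Context: $J_n$ is the $n\times n$ all-ones matrix, and $B_n=i\,M$ where $M$ is the $n\times n$ matrix with zero diagonal, entries $1$ above and $-1$ below the diagonal ($B_1$ is the $1\times1$ zero matrix). $\delta$ is the Kronecker delta. *)

theory Defs
  imports Complex_Main "Jordan_Normal_Form.Matrix"
begin

definition Jmat :: "nat \<Rightarrow> complex mat" where
  "Jmat n = mat n n (\<lambda>_. 1)"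

definition Bmat :: "nat \<Rightarrow> complex mat" where
  "Bmat n = mat n n (\<lambda>(i, j). if i < j then \<i> else if j < i then - \<i> else 0)"

definition mtrace :: "complex mat \<Rightarrow> complex" where
  "mtrace A = (\<Sum>i<dim_row A. A $$ (i, i))"

definition dnm :: "nat \<Rightarrow> nat \<Rightarrow> complex" where
  "dnm n m = mtrace (Jmat n * (Bmat n ^\<^sub>m (2 * m)))"

end

theory Submission imports Defs "HOL-Computational_Algebra.Formal_Power_Series" begin

definition bb :: "nat \<Rightarrow> nat \<Rightarrow> complex" where
  "bb i j = (if i < j then \<i> else if j < i then - \<i> else 0)"

fun vv :: "nat \<Rightarrow> nat \<Rightarrow> nat \<Rightarrow> complex" where
  "vv n 0 j = 1"
| "vv n (Suc M) j = (\<Sum>k<n. vv n M k * bb k j)"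

definition ss :: "nat \<Rightarrow> nat \<Rightarrow> complex" where
  "ss n M = (\<Sum>j<n. vv n M j)"

lemma Bmat_carrier: "Bmat n \<in> carrier_mat n n"
  by (simp add: Bmat_def)

lemma col_sum: "j < n \<Longrightarrow> (\<Sum>i<n. (Bmat n ^\<^sub>m M) $$ (i,j)) = vv n M j"
proof (induction M arbitrary: j)
  case 0
  then show ?case by (simp add: Bmat_def)
next
  case (Suc M)
  have "(\<Sum>i<n. (Bmat n ^\<^sub>m Suc M) $$ (i,j)) = (\<Sum>i<n. \<Sum>k<n. (Bmat n ^\<^sub>m M) $$ (i,k) * bb k j)"
    using Suc.prems Bmat_carrier[of n]
    by (intro sum.cong refl) (simp add: scalar_prod_def Bmat_def bb_def atLeast0LessThan)
  also have "\<dots> = (\<Sum>k<n. (\<Sum>i<n. (Bmat n ^\<^sub>m M) $$ (i,k)) * bb k j)"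
    by (subst sum.swap) (simp add: sum_distrib_right)
  also have "\<dots> = vv n (Suc M) j"
    using Suc.IH by simp
  finally show ?case .
qed

lemma dnm_ss: "dnm n m = ss n (2*m)"
proof -
  have "dnm n m = (\<Sum>i<n. \<Sum>k<n. (Bmat n ^\<^sub>m (2*m)) $$ (k,i))"
    unfolding dnm_def mtrace_def using Bmat_carrier[of n]
    by (intro sum.cong) (auto simp: Jmat_def scalar_prod_def atLeast0LessThan)
  also have "\<dots> = ss n (2*m)" unfolding ss_def
    by (intro sum.cong refl col_sum) simp
  finally show ?thesis .
qed


lemma bb_refl: "k < n \<Longrightarrow> j < n \<Longrightarrow> bb (n - Suc k) (n - Suc j) = - bb k j"
  by (auto simp: bb_def)

lemma vv_refl: "j < n \<Longrightarrow> vv n M (n - Suc j) = (-1)^M * vv n M j"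
proof (induction M arbitrary: j)
  case 0 then show ?case by simp
next
  case (Suc M)
  have "vv n (Suc M) (n - Suc j) = (\<Sum>k<n. vv n M (n - Suc k) * bb (n - Suc k) (n - Suc j))"
    by (simp add: sum.nat_diff_reindex[where g="\<lambda>k. vv n M k * bb k (n - Suc j)", symmetric])
  also have "\<dots> = (\<Sum>k<n. (-1)^Suc M * (vv n M k * bb k j))"
    using Suc by (intro sum.cong refl) (simp add: bb_refl)
  also have "\<dots> = (-1)^Suc M * vv n (Suc M) j"
    by (simp add: sum_distrib_left)
  finally show ?case .
qed

lemma ss_odd: "odd M \<Longrightarrow> ss n M = 0"
proof -
  assume o: "odd M"
  have "ss n M = (\<Sum>j<n. vv n M (n - Suc j))"
    unfolding ss_def by (simp add: sum.nat_diff_reindex)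
  also have "\<dots> = (\<Sum>j<n. - vv n M j)"
    using o by (intro sum.cong refl) (simp add: vv_refl)
  also have "\<dots> = - ss n M" by (simp add: ss_def sum_negf)
  finally show ?thesis by simp
qed

lemma ss0: "ss n 0 = of_nat n" by (simp add: ss_def)

lemma ii: "fps_const \<i> * fps_const \<i> = (-1 :: complex fps)"
  by (simp add: fps_const_mult[symmetric] fps_const_neg[symmetric])

lemma mneg1: "(F :: complex fps) * fps_const (-1) = - F"
  by (rule fps_ext) simp

lemma ss1':"ss (Suc 0) M = (if M = 0 then 1 else 0)"
  by (cases M) (simp_all add: ss_def bb_def)

lemma ss1: "ss 1 M = (if M = 0 then 1 else 0)"
  by (cases M) (simp_all add: ss_def bb_def)

lemma sum_even:
  fixes f :: "nat \<Rightarrow> complex"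
  assumes "\<And>a. odd a \<Longrightarrow> f a = (0::complex)"
  shows "(\<Sum>a=0..2*N. f a) = (\<Sum>k\<le>N. f (2*k))"
proof (induction N)
  case 0 then show ?case by simp
next
  case (Suc N)
  have "(\<Sum>a=0..2*Suc N. f a) = (\<Sum>a=0..2*N. f a) + f (Suc (2*N)) + f (2 * Suc N)"
    by (simp add: add.assoc)
  also have "f (Suc (2*N)) = 0" using assms by simp
  finally show ?case using Suc by simp
qed

context fixes r :: nat
begin

abbreviation "V \<equiv> vv (Suc r)"
abbreviation "W \<equiv> vv r"
definition "pp M = vv (Suc r) M r"
definition "qq M = (\<Sum>j<r. vv (Suc r) M j)"

lemma V_Suc: "j < r \<Longrightarrow> V (Suc M) j = (\<Sum>k<r. V M k * bb k j) - \<i> * pp M"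
  by (simp add: pp_def bb_def)

lemma pp_Suc: "pp (Suc M) = \<i> * qq M"
  by (simp add: pp_def qq_def bb_def sum_distrib_left mult.commute)

lemma top: "j < r \<Longrightarrow> V (Suc M) j = W (Suc M) j - \<i> * (\<Sum>a\<le>M. pp a * W (M - a) j)"
proof (induction M arbitrary: j)
  case 0
  then show ?case by (simp add: pp_def bb_def)
next
  case (Suc M)
  have Wss: "W (Suc (Suc M)) j = (\<Sum>k<r. W (Suc M) k * bb k j)" by (rule vv.simps(2))
  have "V (Suc (Suc M)) j = (\<Sum>k<r. V (Suc M) k * bb k j) - \<i> * pp (Suc M)"
    using Suc.prems by (rule V_Suc)
  also have "(\<Sum>k<r. V (Suc M) k * bb k j) = (\<Sum>k<r. (W (Suc M) k - \<i> * (\<Sum>a\<le>M. pp a * W (M - a) k)) * bb k j)"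
    using Suc.IH by (intro sum.cong refl) (simp del: vv.simps)
  also have "(\<Sum>k<r. (W (Suc M) k - \<i> * (\<Sum>a\<le>M. pp a * W (M - a) k)) * bb k j)
     = W (Suc (Suc M)) j - \<i> * (\<Sum>a\<le>M. pp a * W (Suc (M - a)) j)"
    unfolding Wss vv.simps(2)[of r "M - _"]
    by (simp del: vv.simps add: algebra_simps sum_subtractf sum_distrib_left sum_distrib_right)
       (subst sum.swap, simp del: vv.simps add: sum_distrib_left mult.assoc)
  also have "(\<Sum>a\<le>M. pp a * W (Suc (M - a)) j) = (\<Sum>a\<le>M. pp a * W (Suc M - a) j)"
    by (intro sum.cong refl) (simp del: vv.simps add: Suc_diff_le)
  finally show ?case by (simp del: vv.simps add: algebra_simps vv.simps(1))
qed

lemma qq_Suc: "qq (Suc M) = ss r (Suc M) - \<i> * (\<Sum>a\<le>M. pp a * ss r (M - a))"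
  unfolding qq_def ss_def
  by (simp del: vv.simps add: top sum_subtractf sum_distrib_left sum_distrib_right)
     (subst sum.swap, simp del: vv.simps add: sum_distrib_left mult.assoc)

lemma ss_Suc_r: "ss (Suc r) M = qq M + pp M"
  by (simp add: ss_def qq_def pp_def)

lemma recur: "ss (Suc r) (Suc (Suc N)) = ss r (Suc (Suc N)) + (\<Sum>a=0..N. ss r a * ss (Suc r) (N - a))"
proof -
  define P where "P = Abs_fps pp"
  define Q where "Q = Abs_fps qq"
  define T where "T = Abs_fps (ss r)"
  define S where "S = Abs_fps (ss (Suc r))"
  have Q: "Q = T - fps_const \<i> * fps_X * (P * T)"
  proof (rule fps_ext)
    fix M show "fps_nth Q M = fps_nth (T - fps_const \<i> * fps_X * (P * T)) M"
    proof (cases M)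
      case 0 then show ?thesis by (simp add: Q_def T_def qq_def ss_def)
    next
      case (Suc M')
      have "fps_nth (T - fps_const \<i> * fps_X * (P * T)) M = ss r M - \<i> * fps_nth (P * T) M'"
        by (simp only: mult.assoc fps_mult_left_const_nth fps_X_mult_nth Suc fps_sub_nth) (simp add: T_def)
      then show ?thesis
        by (simp del: vv.simps add: Suc Q_def qq_Suc fps_mult_nth atLeast0AtMost P_def T_def)
    qed
  qed
  have P: "P = 1 + fps_const \<i> * fps_X * Q"
  proof (rule fps_ext)
    fix M show "fps_nth P M = fps_nth (1 + fps_const \<i> * fps_X * Q) M"
      by (cases M) (simp_all add: Q_def P_def pp_Suc mult.assoc, simp add: pp_def)
  qed
  have S: "S = Q + P"
    by (rule fps_ext) (simp add: S_def Q_def P_def ss_Suc_r)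
  have eqP: "P = 1 + fps_const \<i> * fps_X * T + fps_X^2 * P * T"
    apply (subst P) apply (subst Q)
    by (simp add: algebra_simps power2_eq_square mneg1)
  have P2: "P * (1 - fps_X^2 * T) = 1 + fps_const \<i> * fps_X * T"
  proof -
    have "P * (1 - fps_X^2 * T) = P - fps_X^2 * P * T" by (simp add: algebra_simps)
    then show ?thesis using eqP by (metis add_diff_cancel_right')
  qed
  have Q2: "Q * (1 - fps_X^2 * T) = T - fps_const \<i> * fps_X * T"
  proof -
    have "Q * (1 - fps_X^2 * T) = T * (1 - fps_X^2 * T) - fps_const \<i> * fps_X * T * (P * (1 - fps_X^2 * T))"
      by (subst Q) (simp add: algebra_simps)
    also have "\<dots> = T * (1 - fps_X^2 * T) - fps_const \<i> * fps_X * T * (1 + fps_const \<i> * fps_X * T)"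
      by (simp only: P2)
    also have "\<dots> = T - fps_const \<i> * fps_X * T" by (simp add: algebra_simps power2_eq_square mneg1)
    finally show ?thesis .
  qed
  have key: "S - fps_X^2 * (T * S) = 1 + T"
  proof -
    have "S - fps_X^2 * (T * S) = P * (1 - fps_X^2 * T) + Q * (1 - fps_X^2 * T)"
      by (simp add: S algebra_simps)
    then show ?thesis by (simp add: P2 Q2)
  qed
  have "fps_nth (S - fps_X^2 * (T * S)) (Suc (Suc N)) = fps_nth (1 + T) (Suc (Suc N))" by (simp only: key)
  then show ?thesis
    apply (simp only: fps_sub_nth fps_add_nth fps_X_power_mult_nth)
    apply (simp add: fps_mult_nth S_def T_def)
    by (metis add.commute diff_eq_eq)
qed

end

lemma main_rec:
  assumes "n \<ge> 2" "m \<ge> 1"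
  shows "dnm n m = dnm (n - 1) m + (\<Sum>k<m. dnm (n - 1) k * dnm n (m - k - 1))"
proof -
  obtain r where r: "n = Suc r" using assms by (cases n) auto
  obtain N where N: "m = Suc N" using assms by (cases m) auto
  have "dnm n m = ss (Suc r) (Suc (Suc (2*N)))" using r N by (simp add: dnm_ss)
  also have "\<dots> = ss r (Suc (Suc (2*N))) + (\<Sum>a=0..2*N. ss r a * ss (Suc r) (2*N - a))"
    by (rule recur)
  also have "(\<Sum>a=0..2*N. ss r a * ss (Suc r) (2*N - a)) = (\<Sum>k\<le>N. ss r (2*k) * ss (Suc r) (2*N - 2*k))"
    by (rule sum_even) (simp add: ss_odd)
  also have "\<dots> = (\<Sum>k<m. dnm (n - 1) k * dnm n (m - k - 1))"
    using r N by (simp add: dnm_ss lessThan_Suc_atMost[symmetric] right_diff_distrib')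
  finally show ?thesis using r N by (simp add: dnm_ss)
qed

theorem proposition5p1:
  shows "(\<forall>n\<ge>1. dnm n 0 = of_nat n)
    \<and> (\<forall>n\<ge>2. dnm n 0 = 1 + dnm (n - 1) 0)
    \<and> dnm 1 0 = 1
    \<and> (\<forall>m. dnm 1 m = (if m = 0 then 1 else 0))
    \<and> (\<forall>n\<ge>2. \<forall>m\<ge>1.
          dnm n m = dnm (n - 1) m + (\<Sum>k<m. dnm (n - 1) k * dnm n (m - k - 1)))"
  using main_rec by (auto simp: dnm_ss ss0 ss1 ss1' of_nat_diff)

end
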